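(* Let $p>2$ be an integer, $\theta\in(0,1)$, $\eta\ge0$, $\bm D_0\in\mathbb O(n)$, let $\bm X\in\mathbb R^{n\times r}$ have i.i.d. $\mathcal{BG}(\theta)$ entries, $\bm G\in\mathbb R^{n\times r}$ i.i.d. $\mathcal N(0,\eta^2)$ entries independent of $\bm X$, and $\bm Y_N=\bm D_0\bm X+\bm G$. Then the global maximizers of $\bm A\mapsto\mathbb E_{\bm X,\bm G}\|\bm A\bm Y_N\|_p^p$ over $\bm A\in\mathbb O(n)$ are exactly the matrices $\bm A$ with $\bm A^*=\bm D_0\bm\Pi$, $\bm\Pi\in\mathrm{SP}(n)$.
   Context: $\mathcal{BG}(\theta)$ is the law of $b\cdot g$ with $b\sim\mathrm{Ber}(\theta)$, $g\sim\mathcal N(0,1)$ independent. $\mathbb O(n)$: real orthogonal $n\times n$ matrices; $\mathrm{SP}(n)$: signed permutation matrices; $\|\bm M\|_p^p=\sum_{i,j}|M_{ij}|^p$; $\bm A^*$ the transpose. *)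

theory Defs
  imports "HOL-Analysis.Analysis" "HOL-Probability.Probability"
begin

definition std_normal :: "real measure" where
  "std_normal = density lborel std_normal_density"

definition BG :: "real \<Rightarrow> real measure" where
  "BG \<theta> = distr (measure_pmf (bernoulli_pmf \<theta>) \<Otimes>\<^sub>M std_normal) borel
              (\<lambda>(b, g). (if b then 1 else 0) * g)"

text \<open>Gaussian law N(0, eta^2) (eta >= 0), as the law of eta*g with g ~ N(0,1);
  for eta = 0 this is the point mass at 0.\<close>
definition gauss :: "real \<Rightarrow> real measure" where
  "gauss \<eta> = distr std_normal borel (\<lambda>z. \<eta> * z)"

definition mat_of :: "('n::finite \<times> 'r::finite \<Rightarrow> real) \<Rightarrow> real^'r^'n" where
  "mat_of X = (\<chi> i j. X (i, j))"

definition pnorm_pow :: "nat \<Rightarrow> real^'r::finite^'n::finite \<Rightarrow> real" where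
  "pnorm_pow p M = (\<Sum>i\<in>UNIV. \<Sum>j\<in>UNIV. \<bar>M $ i $ j\<bar> ^ p)"

definition objective ::
  "nat \<Rightarrow> real \<Rightarrow> real \<Rightarrow> real^'n::finite^'n \<Rightarrow> 'r::finite itself \<Rightarrow> real^'n^'n \<Rightarrow> real" where
  "objective p \<theta> \<eta> D0 (_ :: 'r itself) A =
     (\<integral>XG. pnorm_pow p (A ** (D0 ** mat_of (fst XG) + mat_of (snd XG) :: real^'r^'n))
        \<partial>(PiM (UNIV :: ('n \<times> 'r) set) (\<lambda>_. BG \<theta>) \<Otimes>\<^sub>M PiM (UNIV :: ('n \<times> 'r) set) (\<lambda>_. gauss \<eta>)))"

definition signed_perm_matrix :: "real^'n::finite^'n \<Rightarrow> bool" where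
  "signed_perm_matrix P \<longleftrightarrow>
     (\<exists>\<sigma> s. \<sigma> permutes (UNIV :: 'n set) \<and> (\<forall>i. s i = 1 \<or> s i = -1) \<and>
            P = (\<chi> i j. if j = \<sigma> i then s i else 0))"

end

theory Submission
  imports Defs
begin


lemma Q_indep:
  fixes N :: "'k \<Rightarrow> 'a measure"
  assumes P: "\<And>k. prob_space (N k)"
  shows "prob_space.indep_vars (PiM UNIV N) N (\<lambda>k \<omega>. \<omega> k) UNIV"
proof -
  interpret Q: prob_space "PiM UNIV N" by (intro prob_space_PiM P)
  have "distr (PiM UNIV N) (PiM UNIV N) (\<lambda>x. \<lambda>i\<in>UNIV. x i) = PiM UNIV N"
  proof -
    have "distr (PiM UNIV N) (PiM UNIV N) (\<lambda>x. \<lambda>i\<in>UNIV. x i) = distr (PiM UNIV N) (PiM UNIV N) (\<lambda>x. x)"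
      by (intro distr_cong) (auto simp: space_PiM restrict_def)
    then show ?thesis by simp
  qed
  moreover have "PiM UNIV (\<lambda>i. distr (PiM UNIV N) (N i) (\<lambda>x. x i)) = PiM UNIV N"
    by (intro PiM_cong refl distr_PiM_component P) auto
  ultimately show ?thesis
    by (subst Q.indep_vars_iff_distr_eq_PiM') auto
qed

lemma Q_block_vars:
  fixes N :: "'k \<Rightarrow> 'a measure"
  assumes P: "\<And>k. prob_space (N k)"
    and D: "disjoint_family_on K L"
    and f: "\<And>x. x \<in> L \<Longrightarrow> f x \<in> measurable (PiM (K x) N) (M' x)"
  shows "prob_space.indep_vars (PiM UNIV N) M' (\<lambda>x \<omega>. f x (restrict \<omega> (K x))) L"
proof -
  interpret Q: prob_space "PiM UNIV N" by (intro prob_space_PiM P)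
  have "Q.indep_vars (\<lambda>j. PiM (K j) N) (\<lambda>j \<omega>. restrict (\<lambda>i. \<omega> i) (K j)) L"
    by (rule Q.indep_vars_restrict[OF Q_indep[OF P]]) (use D in auto)
  from Q.indep_vars_compose2[OF this f] show ?thesis by simp
qed

lemma Q_block_var:
  fixes N :: "'k \<Rightarrow> 'a measure"
  assumes P: "\<And>k. prob_space (N k)"
    and D: "A \<inter> B = {}"
    and f: "f \<in> measurable (PiM A N) S" and g: "g \<in> measurable (PiM B N) T"
  shows "prob_space.indep_var (PiM UNIV N) S (\<lambda>\<omega>. f (restrict \<omega> A)) T (\<lambda>\<omega>. g (restrict \<omega> B))"
proof -
  interpret Q: prob_space "PiM UNIV N" by (intro prob_space_PiM P)
  have "Q.indep_var (PiM A N) (\<lambda>\<omega>. restrict (\<lambda>i. \<omega> i) A) (PiM B N) (\<lambda>\<omega>. restrict (\<lambda>i. \<omega> i) B)"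
    by (rule Q.indep_var_restrict[OF Q_indep[OF P]]) (use D in auto)
  from Q.indep_var_compose[OF this f g] show ?thesis by (simp add: comp_def)
qed


definition Bn :: "real \<Rightarrow> real measure" where
  "Bn \<theta> = distr (measure_pmf (bernoulli_pmf \<theta>)) borel (\<lambda>b. if b then 1 else 0)"

lemma prob_std_normal: "prob_space std_normal"
  unfolding std_normal_def by (rule prob_space_normal_density) simp
lemma sets_std_normal[measurable_cong, simp]: "sets std_normal = sets borel"
  unfolding std_normal_def by simp
lemma space_std_normal[simp]: "space std_normal = UNIV"
  unfolding std_normal_def by simp
lemma prob_Bn: "prob_space (Bn \<theta>)"
  unfolding Bn_def by (intro prob_space.prob_space_distr prob_space_measure_pmf) auto
lemma sets_Bn[measurable_cong, simp]: "sets (Bn \<theta>) = sets borel"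
  unfolding Bn_def by simp
lemma space_Bn[simp]: "space (Bn \<theta>) = UNIV"
  unfolding Bn_def by simp
lemma sets_BG[measurable_cong, simp]: "sets (BG \<theta>) = sets borel"
  unfolding BG_def by simp
lemma sets_gauss[measurable_cong, simp]: "sets (gauss \<eta>) = sets borel"
  unfolding gauss_def by simp
lemma prob_gauss: "prob_space (gauss \<eta>)"
  unfolding gauss_def by (intro prob_space.prob_space_distr prob_std_normal) auto
lemma prob_BG: "prob_space (BG \<theta>)"
  unfolding BG_def
  by (intro prob_space.prob_space_distr prob_space_pair prob_std_normal prob_space_measure_pmf) auto

lemma BG_eq: "distr (Bn \<theta> \<Otimes>\<^sub>M std_normal) borel (\<lambda>(a,b). a*b) = BG \<theta>"
proof -
  interpret S: prob_space std_normal by (rule prob_std_normal)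
  have "Bn \<theta> \<Otimes>\<^sub>M std_normal = distr (measure_pmf (bernoulli_pmf \<theta>) \<Otimes>\<^sub>M std_normal) (borel \<Otimes>\<^sub>M std_normal)
          (\<lambda>(x,y). (if x then 1 else 0, y))"
    unfolding Bn_def
    using pair_measure_distr[of "\<lambda>b. if b then 1 else (0::real)" "measure_pmf (bernoulli_pmf \<theta>)" borel
        "\<lambda>x. x" std_normal std_normal]
    by (simp add: S.sigma_finite_measure_axioms)
  then have "distr (Bn \<theta> \<Otimes>\<^sub>M std_normal) borel (\<lambda>(a,b). a*b) =
     distr (distr (measure_pmf (bernoulli_pmf \<theta>) \<Otimes>\<^sub>M std_normal) (borel \<Otimes>\<^sub>M std_normal)
          (\<lambda>(x,y). (if x then 1 else 0, y))) borel (\<lambda>(a,b). a*b)" by simp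
  also have "\<dots> = distr (measure_pmf (bernoulli_pmf \<theta>) \<Otimes>\<^sub>M std_normal) borel
      ((\<lambda>(a,b). a*b) \<circ> (\<lambda>(x,y). (if x then 1 else 0, y)))"
    by (subst distr_distr) auto
  also have "\<dots> = BG \<theta>" unfolding BG_def
    by (intro distr_cong) auto
  finally show ?thesis .
qed

lemma Q_pair:
  fixes N :: "'k \<Rightarrow> 'a measure"
  assumes P: "\<And>k. prob_space (N k)" and ab: "a \<noteq> b"
  shows "distr (PiM UNIV N) (N a \<Otimes>\<^sub>M N b) (\<lambda>\<omega>. (\<omega> a, \<omega> b)) = N a \<Otimes>\<^sub>M N b"
proof -
  interpret Q: prob_space "PiM UNIV N" by (intro prob_space_PiM P)
  have "Q.indep_var (N a) (\<lambda>\<omega>. (\<lambda>g. g a) (restrict \<omega> {a})) (N b) (\<lambda>\<omega>. (\<lambda>g. g b) (restrict \<omega> {b}))"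
    by (rule Q_block_var[OF P]) (use ab in auto)
  then have "Q.indep_var (N a) (\<lambda>\<omega>. \<omega> a) (N b) (\<lambda>\<omega>. \<omega> b)" by simp
  then have "distr (PiM UNIV N) (N a) (\<lambda>\<omega>. \<omega> a) \<Otimes>\<^sub>M distr (PiM UNIV N) (N b) (\<lambda>\<omega>. \<omega> b) =
     distr (PiM UNIV N) (N a \<Otimes>\<^sub>M N b) (\<lambda>\<omega>. (\<omega> a, \<omega> b))"
    by (subst (asm) Q.indep_var_distribution_eq) auto
  moreover have "distr (PiM UNIV N) (N a) (\<lambda>\<omega>. \<omega> a) = N a" "distr (PiM UNIV N) (N b) (\<lambda>\<omega>. \<omega> b) = N b"
    by (intro distr_PiM_component P; simp)+
  ultimately show ?thesis by simp
qed

definition NN :: "real \<Rightarrow> ('x + ('x + 'x)) \<Rightarrow> real measure" where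
  "NN \<theta> k = (case k of Inl _ \<Rightarrow> Bn \<theta> | Inr _ \<Rightarrow> std_normal)"

lemma prob_NN: "prob_space (NN \<theta> k)"
  unfolding NN_def by (auto split: sum.split intro: prob_Bn prob_std_normal)
lemma sets_NN[measurable_cong, simp]: "sets (NN \<theta> k) = sets borel"
  unfolding NN_def by (auto split: sum.split)
lemma space_NN[simp]: "space (NN \<theta> k) = UNIV"
  unfolding NN_def by (auto split: sum.split)



lemma T1_distr:
  "distr (PiM UNIV (NN \<theta>)) (PiM UNIV (\<lambda>_. borel)) (\<lambda>\<omega> (x::'x). \<omega> (Inl x) * \<omega> (Inr (Inl x)))
     = PiM UNIV (\<lambda>_. BG \<theta>)"
proof -
  interpret Q: prob_space "PiM UNIV (NN \<theta>) :: ('x + ('x + 'x) \<Rightarrow> real) measure" by (intro prob_space_PiM prob_NN)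
  define K :: "'x \<Rightarrow> ('x + ('x + 'x)) set" where "K x = {Inl x, Inr (Inl x)}" for x
  have ind: "Q.indep_vars (\<lambda>_. borel) (\<lambda>x \<omega>. (\<lambda>g. g (Inl x) * g (Inr (Inl x))) (restrict \<omega> (K x))) UNIV"
    by (rule Q_block_vars[OF prob_NN]) (auto simp: K_def disjoint_family_on_def)
  have ind': "Q.indep_vars (\<lambda>_. borel) (\<lambda>x \<omega>. \<omega> (Inl x) * \<omega> (Inr (Inl x))) UNIV"
    using ind [[show_types]] by (simp add: K_def)
  have c: "distr (PiM UNIV (NN \<theta>)) borel (\<lambda>\<omega>. \<omega> (Inl x) * \<omega> (Inr (Inl x))) = BG \<theta>" for x
  proof -
    have "distr (PiM UNIV (NN \<theta>)) borel (\<lambda>\<omega>. \<omega> (Inl x) * \<omega> (Inr (Inl x))) =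
      distr (distr (PiM UNIV (NN \<theta>)) (NN \<theta> (Inl x) \<Otimes>\<^sub>M NN \<theta> (Inr (Inl x))) (\<lambda>\<omega>. (\<omega> (Inl x), \<omega> (Inr (Inl x)))))
         borel (\<lambda>(a,b). a*b)"
      by (subst distr_distr) (auto simp: comp_def)
    also have "\<dots> = distr (NN \<theta> (Inl x) \<Otimes>\<^sub>M NN \<theta> (Inr (Inl x))) borel (\<lambda>(a,b). a*b)"
      by (subst Q_pair[OF prob_NN]) auto
    also have "\<dots> = BG \<theta>" by (simp add: NN_def BG_eq)
    finally show ?thesis .
  qed
  have "distr (PiM UNIV (NN \<theta>)) (PiM UNIV (\<lambda>_. borel)) (\<lambda>\<omega>. \<lambda>x\<in>(UNIV::'x set). \<omega> (Inl x) * \<omega> (Inr (Inl x)))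
     = PiM (UNIV::'x set) (\<lambda>x. distr (PiM UNIV (NN \<theta>)) borel (\<lambda>\<omega>. \<omega> (Inl x) * \<omega> (Inr (Inl x))))"
    using ind' by (subst (asm) Q.indep_vars_iff_distr_eq_PiM') auto
  then show ?thesis by (simp add: c restrict_UNIV)
qed



lemma meas_NN_comp[measurable]: "k \<in> A \<Longrightarrow> (\<lambda>g. g k) \<in> borel_measurable (PiM A (NN \<theta>))"
proof -
  assume "k \<in> A"
  then have "(\<lambda>g. g k) \<in> measurable (PiM A (NN \<theta>)) (NN \<theta> k)" by (rule measurable_component_singleton)
  then show ?thesis using measurable_cong_sets[OF refl sets_NN, of "PiM A (NN \<theta>)" \<theta> k] by simp
qed

lemma T2_distr:
  "distr (PiM UNIV (NN \<theta>)) (PiM UNIV (\<lambda>_. borel)) (\<lambda>\<omega> (x::'x). \<eta> * \<omega> (Inr (Inr x)))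
     = PiM UNIV (\<lambda>_. gauss \<eta>)"
proof -
  interpret Q: prob_space "PiM UNIV (NN \<theta>) :: ('x + ('x + 'x) \<Rightarrow> real) measure" by (intro prob_space_PiM prob_NN)
  define K :: "'x \<Rightarrow> ('x + ('x + 'x)) set" where "K x = {Inr (Inr x)}" for x
  have ind: "Q.indep_vars (\<lambda>_. borel) (\<lambda>x \<omega>. (\<lambda>g. \<eta> * g (Inr (Inr x))) (restrict \<omega> (K x))) UNIV"
    by (rule Q_block_vars[OF prob_NN]) (auto simp: K_def disjoint_family_on_def)
  have ind': "Q.indep_vars (\<lambda>_. borel) (\<lambda>x \<omega>. \<eta> * \<omega> (Inr (Inr x))) UNIV"
    using ind by (simp add: K_def)
  have c: "distr (PiM UNIV (NN \<theta>)) borel (\<lambda>\<omega>. \<eta> * \<omega> (Inr (Inr x))) = gauss \<eta>" for x :: 'x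
  proof -
    have "distr (PiM UNIV (NN \<theta>)) borel (\<lambda>\<omega>. \<eta> * \<omega> (Inr (Inr x))) =
      distr (distr (PiM UNIV (NN \<theta>)) (NN \<theta> (Inr (Inr x))) (\<lambda>\<omega>. \<omega> (Inr (Inr x)))) borel (\<lambda>z. \<eta> * z)"
      by (subst distr_distr) (auto simp: comp_def NN_def measurable_cong_sets[OF sets_std_normal refl])
    also have "\<dots> = distr (NN \<theta> (Inr (Inr x))) borel (\<lambda>z. \<eta> * z)"
      by (subst distr_PiM_component[OF prob_NN]) auto
    also have "\<dots> = gauss \<eta>" by (simp add: NN_def gauss_def)
    finally show ?thesis .
  qed
  have "distr (PiM UNIV (NN \<theta>)) (PiM UNIV (\<lambda>_. borel)) (\<lambda>\<omega>. \<lambda>x\<in>(UNIV::'x set). \<eta> * \<omega> (Inr (Inr x)))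
     = PiM (UNIV::'x set) (\<lambda>x. distr (PiM UNIV (NN \<theta>)) borel (\<lambda>\<omega>. \<eta> * \<omega> (Inr (Inr x))))"
    using ind' by (subst (asm) Q.indep_vars_iff_distr_eq_PiM') auto
  then show ?thesis by (simp add: c restrict_UNIV)
qed

lemma M_eq:
  "PiM UNIV (\<lambda>_. BG \<theta>) \<Otimes>\<^sub>M PiM UNIV (\<lambda>_. gauss \<eta>) =
   distr (PiM UNIV (NN \<theta>)) (PiM UNIV (\<lambda>_. borel) \<Otimes>\<^sub>M PiM UNIV (\<lambda>_. borel))
     (\<lambda>\<omega>. (\<lambda>(x::'x). \<omega> (Inl x) * \<omega> (Inr (Inl x)), \<lambda>(x::'x). \<eta> * \<omega> (Inr (Inr x))))"
proof -
  interpret Q: prob_space "PiM UNIV (NN \<theta>) :: ('x + ('x + 'x) \<Rightarrow> real) measure" by (intro prob_space_PiM prob_NN)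
  define A :: "('x + ('x + 'x)) set" where "A = range Inl \<union> range (Inr \<circ> Inl)"
  define B :: "('x + ('x + 'x)) set" where "B = range (Inr \<circ> Inr)"
  have f: "(\<lambda>g (x::'x). g (Inl x) * g (Inr (Inl x))) \<in> measurable (PiM A (NN \<theta>)) (PiM UNIV (\<lambda>_. borel))"
  proof -
    have "(\<lambda>g. \<lambda>(x::'x)\<in>UNIV. g (Inl x) * g (Inr (Inl x))) \<in> measurable (PiM A (NN \<theta>)) (PiM UNIV (\<lambda>_. borel))"
      unfolding A_def
      by (rule measurable_restrict, rule borel_measurable_times;
           rule meas_NN_comp) auto
    then show ?thesis by (simp add: restrict_UNIV)
  qed
  have g: "(\<lambda>g (x::'x). \<eta> * g (Inr (Inr x))) \<in> measurable (PiM B (NN \<theta>)) (PiM UNIV (\<lambda>_. borel))"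
  proof -
    have "(\<lambda>g. \<lambda>(x::'x)\<in>UNIV. \<eta> * g (Inr (Inr x))) \<in> measurable (PiM B (NN \<theta>)) (PiM UNIV (\<lambda>_. borel))"
      unfolding B_def
      by (rule measurable_restrict, rule borel_measurable_times, simp, rule meas_NN_comp) auto
    then show ?thesis by (simp add: restrict_UNIV)
  qed
  have "Q.indep_var (PiM UNIV (\<lambda>_. borel)) (\<lambda>\<omega>. (\<lambda>g (x::'x). g (Inl x) * g (Inr (Inl x))) (restrict \<omega> A))
     (PiM UNIV (\<lambda>_. borel)) (\<lambda>\<omega>. (\<lambda>g (x::'x). \<eta> * g (Inr (Inr x))) (restrict \<omega> B))"
    by (rule Q_block_var[OF prob_NN _ f g]) (auto simp: A_def B_def)
  then have "Q.indep_var (PiM UNIV (\<lambda>_. borel)) (\<lambda>\<omega> (x::'x). \<omega> (Inl x) * \<omega> (Inr (Inl x)))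
     (PiM UNIV (\<lambda>_. borel)) (\<lambda>\<omega> (x::'x). \<eta> * \<omega> (Inr (Inr x)))"
    by (simp add: A_def B_def)
  then show ?thesis
    by (subst (asm) Q.indep_var_distribution_eq) (simp add: T1_distr T2_distr)
qed



definition mp :: "nat \<Rightarrow> real" where
  "mp p = (\<integral>x. std_normal_density x * \<bar>x\<bar>^p \<partial>lborel)"

lemma PiM_indep:
  fixes N :: "'k \<Rightarrow> 'a measure"
  assumes P: "\<And>k. k \<in> J \<Longrightarrow> prob_space (N k)" and ne: "J \<noteq> {}"
  shows "prob_space.indep_vars (PiM J N) N (\<lambda>k \<omega>. \<omega> k) J"
proof -
  interpret Q: prob_space "PiM J N" by (intro prob_space_PiM P)
  have "distr (PiM J N) (PiM J N) (\<lambda>x. \<lambda>i\<in>J. x i) = PiM J N"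
  proof -
    have "distr (PiM J N) (PiM J N) (\<lambda>x. \<lambda>i\<in>J. x i) = distr (PiM J N) (PiM J N) (\<lambda>x. x)"
      by (intro distr_cong) (auto simp: space_PiM restrict_def PiE_def extensional_def)
    then show ?thesis by simp
  qed
  moreover have "PiM J (\<lambda>i. distr (PiM J N) (N i) (\<lambda>x. x i)) = PiM J N"
    by (intro PiM_cong refl distr_PiM_component P) auto
  ultimately show ?thesis
    by (subst Q.indep_vars_iff_distr_eq_PiM') (auto simp: ne)
qed

lemma gauss_lin:
  fixes N :: "'k \<Rightarrow> real measure" and p :: nat
  assumes fin: "finite J" and NJ: "\<And>k. k \<in> J \<Longrightarrow> N k = std_normal" and p: "p > 0"
  shows "(\<integral>\<^sup>+\<omega>. ennreal (\<bar>\<Sum>k\<in>J. d k * \<omega> k\<bar>^p) \<partial>PiM J N) = ennreal (sqrt (\<Sum>k\<in>J. (d k)\<^sup>2)^p * mp p)"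
proof -
  have PJ: "prob_space (N k)" if "k \<in> J" for k using NJ[OF that] prob_std_normal by simp
  interpret P: prob_space "PiM J N" by (intro prob_space_PiM PJ)
  define J' where "J' = {k\<in>J. d k \<noteq> 0}"
  have sumJ: "(\<Sum>k\<in>J. d k * \<omega> k) = (\<Sum>k\<in>J'. d k * \<omega> k)" for \<omega>
    unfolding J'_def by (rule sum.mono_neutral_right) (auto simp: fin)
  have sumJ2: "(\<Sum>k\<in>J. (d k)\<^sup>2) = (\<Sum>k\<in>J'. \<bar>d k\<bar>\<^sup>2)"
    unfolding J'_def by (subst sum.mono_neutral_right[of J]) (auto simp: fin)
  have finJ': "finite J'" using fin by (simp add: J'_def)
  show ?thesis
  proof (cases "J' = {}")
    case True
    then show ?thesis using p by (simp add: sumJ sumJ2 power_0_left)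
  next
    case ne: False
    have comp: "(\<lambda>\<omega>. \<omega> k) \<in> borel_measurable (PiM J N)" if "k \<in> J" for k
      using measurable_component_singleton[OF that, of N] NJ[OF that]
      by (simp add: measurable_cong_sets[OF refl sets_std_normal])
    have ind0: "P.indep_vars N (\<lambda>k \<omega>. \<omega> k) J"
      by (rule PiM_indep[OF PJ]) (use ne J'_def in auto)
    have ind: "P.indep_vars (\<lambda>_. borel) (\<lambda>k \<omega>. d k * \<omega> k) J'"
    proof -
      have "P.indep_vars (\<lambda>_. borel) (\<lambda>k \<omega>. (\<lambda>x. d k * x) (\<omega> k)) J"
        by (rule P.indep_vars_compose2[OF ind0]) (simp add: NJ measurable_cong_sets[OF sets_std_normal refl])
      then show ?thesis by (rule P.indep_vars_subset) (auto simp: J'_def)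
    qed
    have dstd: "distributed (PiM J N) lborel (\<lambda>\<omega>. \<omega> k) std_normal_density" if "k \<in> J" for k
    proof -
      have "distr (PiM J N) lborel (\<lambda>\<omega>. \<omega> k) = distr (PiM J N) (N k) (\<lambda>\<omega>. \<omega> k)"
        by (intro distr_cong) (auto simp: NJ[OF that])
      also have "\<dots> = N k" by (rule distr_PiM_component[OF PJ that])
      finally show ?thesis unfolding distributed_def
        using comp[OF that] NJ[OF that] by (simp add: std_normal_def)
    qed
    have dk: "distributed (PiM J N) lborel (\<lambda>\<omega>. d k * \<omega> k) (normal_density 0 \<bar>d k\<bar>)" if "k \<in> J'" for k
      using P.normal_density_affine[OF dstd[of k], of "d k" 0] that by (simp add: J'_def)
    define s where "s = sqrt (\<Sum>k\<in>J'. \<bar>d k\<bar>\<^sup>2)"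
    have spos: "s > 0" unfolding s_def using ne finJ'
      by (intro real_sqrt_gt_zero sum_pos) (auto simp: J'_def)
    have dS: "distributed (PiM J N) lborel (\<lambda>\<omega>. \<Sum>k\<in>J'. d k * \<omega> k) (normal_density 0 s)"
    proof -
      have "distributed (PiM J N) lborel (\<lambda>\<omega>. \<Sum>k\<in>J'. d k * \<omega> k) (normal_density (\<Sum>k\<in>J'. 0) (sqrt (\<Sum>k\<in>J'. \<bar>d k\<bar>\<^sup>2)))"
        by (rule P.sum_indep_normal[OF finJ' ne ind]) (use dk in \<open>auto simp: J'_def\<close>)
      then show ?thesis by (simp add: s_def)
    qed
    have dS': "distributed (PiM J N) lborel (\<lambda>\<omega>. (\<Sum>k\<in>J'. d k * \<omega> k) / s) std_normal_density"
      using dS P.normal_standard_normal_convert[OF spos] by simp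
    have "(\<integral>\<^sup>+\<omega>. ennreal (\<bar>\<Sum>k\<in>J. d k * \<omega> k\<bar>^p) \<partial>PiM J N) =
        (\<integral>\<^sup>+\<omega>. ennreal (s^p) * ennreal (\<bar>(\<Sum>k\<in>J'. d k * \<omega> k) / s\<bar>^p) \<partial>PiM J N)"
      using spos by (intro nn_integral_cong) (simp add: sumJ ennreal_mult'[symmetric] power_divide abs_div)
    also have "\<dots> = ennreal (s^p) * (\<integral>\<^sup>+\<omega>. ennreal (\<bar>(\<Sum>k\<in>J'. d k * \<omega> k) / s\<bar>^p) \<partial>PiM J N)"
    proof (rule nn_integral_cmult)
      have rv: "(\<lambda>\<omega>. (\<Sum>k\<in>J'. d k * \<omega> k) / s) \<in> measurable (PiM J N) lborel"
        using dS' by (simp add: distributed_def)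
      show "(\<lambda>\<omega>. ennreal (\<bar>(\<Sum>k\<in>J'. d k * \<omega> k) / s\<bar>^p)) \<in> borel_measurable (PiM J N)"
        using measurable_compose[OF rv, of "\<lambda>x. ennreal (\<bar>x\<bar>^p)" borel] by simp
    qed
    also have "(\<integral>\<^sup>+\<omega>. ennreal (\<bar>(\<Sum>k\<in>J'. d k * \<omega> k) / s\<bar>^p) \<partial>PiM J N) =
        (\<integral>\<^sup>+x. ennreal (std_normal_density x) * ennreal (\<bar>x\<bar>^p) \<partial>lborel)"
      by (rule distributed_nn_integral[OF dS', symmetric]) simp
    also have "\<dots> = ennreal (mp p)"
      unfolding mp_def
      by (subst nn_integral_eq_integral[symmetric])
         (auto simp: ennreal_mult'[symmetric] integrable_std_normal_moment_abs intro!: nn_integral_cong)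
    finally show ?thesis using spos
      by (simp add: s_def sumJ2 ennreal_mult'[symmetric] mp_def)
  qed
qed




lemma sum_range_Inr:
  fixes d :: "('x::finite + ('y::finite + 'z::finite)) \<Rightarrow> real"
  shows "(\<Sum>k\<in>range Inr. d k) = (\<Sum>x\<in>UNIV. d (Inr (Inl x))) + (\<Sum>x\<in>UNIV. d (Inr (Inr x)))"
proof -
  have "(\<Sum>k\<in>range Inr. d k) = (\<Sum>z\<in>UNIV. d (Inr z))"
    by (subst sum.reindex) (auto simp: inj_on_def)
  also have "\<dots> = (\<Sum>z\<in>UNIV <+> UNIV. d (Inr z))" by (simp add: UNIV_Plus_UNIV)
  also have "\<dots> = (\<Sum>x\<in>UNIV. d (Inr (Inl x))) + (\<Sum>x\<in>UNIV. d (Inr (Inr x)))"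
    by (subst sum.Plus) (auto simp: comp_def)
  finally show ?thesis .
qed

lemma Inr_range_simps[simp]: "Inr a \<notin> range Inl" "Inr a \<in> range Inr" "Inl a \<in> range Inl" "Inl a \<notin> range Inr"
  by auto

lemma term_fubini:
  fixes c e :: "'x::finite \<Rightarrow> real" and p :: nat
  assumes p: "p > 0"
  shows "(\<integral>\<^sup>+\<omega>. ennreal (\<bar>(\<Sum>x\<in>UNIV. c x * \<omega> (Inl x) * \<omega> (Inr (Inl x))) + (\<Sum>x\<in>UNIV. e x * \<omega> (Inr (Inr x)))\<bar>^p)
          \<partial>PiM UNIV (NN \<theta>))
       = (\<integral>\<^sup>+b. ennreal (sqrt ((\<Sum>x\<in>UNIV. (c x * b (Inl x))\<^sup>2) + (\<Sum>x\<in>UNIV. (e x)\<^sup>2))^p * mp p)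
          \<partial>PiM (range Inl) (NN \<theta>))"
proof -
  let ?f = "\<lambda>\<omega>::('x + ('x + 'x)) \<Rightarrow> real. ennreal (\<bar>(\<Sum>x\<in>UNIV. c x * \<omega> (Inl x) * \<omega> (Inr (Inl x))) + (\<Sum>x\<in>UNIV. e x * \<omega> (Inr (Inr x)))\<bar>^p)"
  interpret PS: product_sigma_finite "NN \<theta> :: ('x + ('x + 'x)) \<Rightarrow> real measure"
    unfolding product_sigma_finite_def
    using prob_NN by (metis prob_space_imp_sigma_finite)
  have U: "(UNIV :: ('x + ('x + 'x)) set) = range Inl \<union> range Inr" by (rule UNIV_sum)
  have meas: "?f \<in> borel_measurable (PiM (range Inl \<union> range Inr) (NN \<theta>))"
    by measurable
  have "(\<integral>\<^sup>+\<omega>. ?f \<omega> \<partial>PiM UNIV (NN \<theta>)) = (\<integral>\<^sup>+\<omega>. ?f \<omega> \<partial>PiM (range Inl \<union> range Inr) (NN \<theta>))"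
    by (simp only: U[symmetric])
  also have "\<dots> = (\<integral>\<^sup>+b. \<integral>\<^sup>+y. ?f (merge (range Inl) (range Inr) (b, y)) \<partial>PiM (range Inr) (NN \<theta>) \<partial>PiM (range Inl) (NN \<theta>))"
    by (rule PS.product_nn_integral_fold) (auto simp: meas)
  also have "\<dots> = (\<integral>\<^sup>+b. ennreal (sqrt ((\<Sum>x\<in>UNIV. (c x * b (Inl x))\<^sup>2) + (\<Sum>x\<in>UNIV. (e x)\<^sup>2))^p * mp p)
          \<partial>PiM (range Inl) (NN \<theta>))"
  proof (rule nn_integral_cong)
    fix b :: "('x + ('x + 'x)) \<Rightarrow> real"
    define d :: "('x + ('x + 'x)) \<Rightarrow> real" where
      "d k = (case k of Inr (Inl x) \<Rightarrow> c x * b (Inl x) | Inr (Inr x) \<Rightarrow> e x | Inl _ \<Rightarrow> 0)" for k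
    have eq: "?f (merge (range Inl) (range Inr) (b, y)) = ennreal (\<bar>\<Sum>k\<in>range Inr. d k * y k\<bar>^p)" for y
      by (simp add: sum_range_Inr d_def merge_def mult.assoc mult.left_commute)
    have eq2: "(\<Sum>k\<in>range Inr. (d k)\<^sup>2) = (\<Sum>x\<in>UNIV. (c x * b (Inl x))\<^sup>2) + (\<Sum>x\<in>UNIV. (e x)\<^sup>2)"
      by (simp add: sum_range_Inr d_def)
    show "(\<integral>\<^sup>+y. ?f (merge (range Inl) (range Inr) (b, y)) \<partial>PiM (range Inr) (NN \<theta>)) =
       ennreal (sqrt ((\<Sum>x\<in>UNIV. (c x * b (Inl x))\<^sup>2) + (\<Sum>x\<in>UNIV. (e x)\<^sup>2))^p * mp p)"
      unfolding eq eq2[symmetric]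
      by (rule gauss_lin[OF _ _ p]) (auto simp: NN_def)
  qed
  finally show ?thesis .
qed




lemma sqrt_pow_deriv:
  fixes a z :: real and p :: nat
  assumes "z + a > 0"
  shows "((\<lambda>t. sqrt (t + a) ^ p) has_real_derivative (real p * sqrt (z + a) ^ (p - 1) / (2 * sqrt (z + a)))) (at z)"
  using assms
  by (auto intro!: derivative_eq_intros simp: field_simps)

lemma sqrt_pow_D:
  fixes a z :: real and p :: nat
  assumes "z + a > 0" "p \<ge> 2"
  shows "real p * sqrt (z + a) ^ (p - 1) / (2 * sqrt (z + a)) = real p / 2 * sqrt (z + a) ^ (p - 2)"
proof -
  have sp: "sqrt (z + a) > 0" using assms by simp
  have "p - 1 = Suc (p - 2)" using assms by linarith
  then show ?thesis using sp by (simp add: field_simps)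
qed

lemma sqrt_pow_strict_convex:
  fixes a s :: real and p :: nat
  assumes a: "a \<ge> 0" and p: "p > 2" and s: "0 < s" "s < 1"
  shows "sqrt (s + a) ^ p < s * sqrt (1 + a) ^ p + (1 - s) * sqrt (0 + a) ^ p"
proof -
  define \<phi> where "\<phi> t = sqrt (t + a) ^ p" for t
  define D where "D z = real p / 2 * sqrt (z + a) ^ (p - 2)" for z
  have der: "(\<phi> has_real_derivative D z) (at z)" if "z > 0" for z
  proof -
    have za: "z + a > 0" using that a by simp
    have e: "real p * sqrt (z + a) ^ (p - 1) / (2 * sqrt (z + a)) = D z"
      unfolding D_def using sqrt_pow_D[OF za, of p] p by simp
    have "(\<phi> has_real_derivative (real p * sqrt (z + a) ^ (p - 1) / (2 * sqrt (z + a)))) (at z)"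
      unfolding \<phi>_def by (rule sqrt_pow_deriv[OF za])
    then show ?thesis by (simp only: e)
  qed
  have cont: "continuous_on {x..y} \<phi>" for x y unfolding \<phi>_def by (intro continuous_intros)
  have mvt: "\<exists>z. x < z \<and> z < y \<and> \<phi> y - \<phi> x = (y - x) * D z" if "0 \<le> x" "x < y" for x y
  proof -
    obtain l z where z: "x < z" "z < y" "(\<phi> has_real_derivative l) (at z)" "\<phi> y - \<phi> x = (y - x) * l"
    proof -
      have "\<phi> differentiable at t" if "x < t" "t < y" for t
        using der[of t] that \<open>0 \<le> x\<close> real_differentiable_def by force
      then show ?thesis using MVT[OF \<open>x < y\<close> cont] that by blast
    qed
    have "l = D z" using DERIV_unique[OF z(3) der] z that by simp
    then show ?thesis using z by blast
  qed
  obtain z1 where z1: "0 < z1" "z1 < s" "\<phi> s - \<phi> 0 = s * D z1" using mvt[of 0 s] s by auto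
  obtain z2 where z2: "s < z2" "z2 < 1" "\<phi> 1 - \<phi> s = (1 - s) * D z2" using mvt[of s 1] s by auto
  have "sqrt (z1 + a) < sqrt (z2 + a)" using z1 z2 a by simp
  then have "sqrt (z1 + a) ^ (p - 2) < sqrt (z2 + a) ^ (p - 2)"
    using p z1 a by (intro power_strict_mono) auto
  then have "D z1 < D z2" unfolding D_def using p by simp
  then have "s * (1 - s) * D z1 < s * (1 - s) * D z2" using s by simp
  moreover have "s * (\<phi> 1 - \<phi> s) = s * (1 - s) * D z2" using z2(3) by simp
  moreover have "(1 - s) * (\<phi> s - \<phi> 0) = s * (1 - s) * D z1" using z1(3) by simp
  moreover have "s * \<phi> 1 + (1 - s) * \<phi> 0 - \<phi> s = s * (\<phi> 1 - \<phi> s) - (1 - s) * (\<phi> s - \<phi> 0)"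
    by (simp add: algebra_simps)
  ultimately have "\<phi> s < s * \<phi> 1 + (1 - s) * \<phi> 0" by linarith
  then show ?thesis unfolding \<phi>_def by simp
qed




lemma AE_Bn01: "AE t in Bn \<theta>. t = 0 \<or> t = 1"
  unfolding Bn_def by (subst AE_distr_iff) auto

lemma Collect_bool_simps: "{x. x} = {True}" "{x. \<not> x} = {False}" by auto

lemma NN_Inl[simp]: "NN \<theta> (Inl x) = Bn \<theta>" by (simp add: NN_def)
lemma NN_Inr[simp]: "NN \<theta> (Inr x) = std_normal" by (simp add: NN_def)
lemma AE_NN01: "AE t in NN \<theta> (Inl x). t = 0 \<or> t = 1"
  using AE_Bn01[of \<theta>] by (simp only: NN_Inl)

lemma nn_integral_Bn:
  assumes th: "0 \<le> \<theta>" "\<theta> \<le> 1" and F: "\<And>t. 0 \<le> F t" and Fm: "F \<in> borel_measurable borel"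
  shows "(\<integral>\<^sup>+t. ennreal (F t) \<partial>Bn \<theta>) = ennreal (\<theta> * F 1 + (1 - \<theta>) * F 0)"
proof -
  have "(\<integral>\<^sup>+t. ennreal (F t) \<partial>Bn \<theta>) = (\<integral>\<^sup>+b. ennreal (F (if b then 1 else 0)) \<partial>measure_pmf (bernoulli_pmf \<theta>))"
    unfolding Bn_def using Fm by (subst nn_integral_distr) (auto, measurable)
  also have "\<dots> = ennreal (\<theta> * F 1 + (1 - \<theta>) * F 0)"
    using th F by (simp add: ac_simps ennreal_mult)
  finally show ?thesis .
qed

lemma nn_integral_Pb_comp:
  fixes x :: 'x
  assumes th: "0 \<le> \<theta>" "\<theta> \<le> 1" and F: "\<And>t. 0 \<le> F t" and Fm: "F \<in> borel_measurable borel"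
  shows "(\<integral>\<^sup>+b. ennreal (F (b (Inl x))) \<partial>PiM (range Inl) (NN \<theta> :: ('x + ('x + 'x)) \<Rightarrow> real measure))
     = ennreal (\<theta> * F 1 + (1 - \<theta>) * F 0)"
proof -
  have "(\<integral>\<^sup>+b. ennreal (F (b (Inl x))) \<partial>PiM (range Inl) (NN \<theta> :: ('x + ('x + 'x)) \<Rightarrow> real measure))
     = (\<integral>\<^sup>+t. ennreal (F t) \<partial>distr (PiM (range Inl) (NN \<theta> :: ('x + ('x + 'x)) \<Rightarrow> real measure)) (NN \<theta> (Inl x)) (\<lambda>b. b (Inl x)))"
  proof -
    have m2: "(\<lambda>t. ennreal (F t)) \<in> borel_measurable borel" using Fm by measurable
    have m1: "(\<lambda>b. b (Inl x)) \<in> measurable (PiM (range Inl) (NN \<theta> :: ('x + ('x + 'x)) \<Rightarrow> real measure)) (NN \<theta> (Inl x))"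
      by (rule measurable_component_singleton) auto
    show ?thesis using nn_integral_distr[OF m1, of "\<lambda>t. ennreal (F t)"] m2
      by (simp add: measurable_cong_sets[OF sets_Bn refl])
  qed
  also have "distr (PiM (range Inl) (NN \<theta> :: ('x + ('x + 'x)) \<Rightarrow> real measure)) (NN \<theta> (Inl x)) (\<lambda>b. b (Inl x)) = NN \<theta> (Inl x)"
    by (rule distr_PiM_component[OF prob_NN]) auto
  also have "(\<integral>\<^sup>+t. ennreal (F t) \<partial>NN \<theta> (Inl x)) = ennreal (\<theta> * F 1 + (1 - \<theta>) * F 0)"
    using nn_integral_Bn[OF th F Fm] by (simp add: NN_def)
  finally show ?thesis .
qed

lemma AE_Pb_01:
  "AE b in PiM (range Inl) (NN \<theta> :: ('x::finite + ('x + 'x)) \<Rightarrow> real measure). \<forall>x. b (Inl x) = 0 \<or> b (Inl x) = 1"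
proof -
  have "AE b in PiM (range Inl) (NN \<theta> :: ('x::finite + ('x + 'x)) \<Rightarrow> real measure). b (Inl x) = 0 \<or> b (Inl x) = 1" for x
  proof (rule AE_PiM_component[OF prob_NN])
    show "AE t in NN \<theta> (Inl x). t = 0 \<or> t = 1"
      by (rule AE_NN01)
  qed auto
  then have "AE b in PiM (range Inl) (NN \<theta> :: ('x::finite + ('x + 'x)) \<Rightarrow> real measure). \<forall>x\<in>UNIV. b (Inl x) = 0 \<or> b (Inl x) = 1"
    by (intro AE_finite_allI) auto
  then show ?thesis by simp
qed

lemma emeasure_Pb_pair:
  fixes x1 x2 :: 'x
  assumes th: "0 \<le> \<theta>" "\<theta> \<le> 1" and ne: "x1 \<noteq> x2"
  shows "emeasure (PiM (range Inl) (NN \<theta> :: ('x + ('x + 'x)) \<Rightarrow> real measure))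
            {b \<in> space (PiM (range Inl) (NN \<theta> :: ('x + ('x + 'x)) \<Rightarrow> real measure)). b (Inl x1) = 1 \<and> b (Inl x2) = 0}
         = ennreal (\<theta> * (1 - \<theta>))"
proof -
  define A where "A k = (if k = Inl x1 then {1::real} else {0})" for k :: "'x + ('x + 'x)"
  have eqs: "{b \<in> space (PiM (range Inl) (NN \<theta> :: ('x + ('x + 'x)) \<Rightarrow> real measure)). b (Inl x1) = 1 \<and> b (Inl x2) = 0}
     = prod_emb (range Inl) (NN \<theta>) {Inl x1, Inl x2} (Pi\<^sub>E {Inl x1, Inl x2} A)"
    using ne by (auto simp: prod_emb_def A_def space_PiM)
  have e1: "emeasure (Bn \<theta>) {1} = ennreal \<theta>"
    unfolding Bn_def using th
    by (subst emeasure_distr) (auto simp: vimage_def emeasure_pmf_single Collect_bool_simps)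
  have e0: "emeasure (Bn \<theta>) {0} = ennreal (1 - \<theta>)"
    unfolding Bn_def using th
    by (subst emeasure_distr) (auto simp: vimage_def emeasure_pmf_single Collect_bool_simps)
  show ?thesis unfolding eqs using ne th
    by (subst emeasure_PiM_emb[OF prob_NN]) (auto simp: A_def NN_def e1 e0 ennreal_mult)
qed




lemma g_convex:
  fixes a s m :: real and p :: nat
  assumes a: "a \<ge> 0" and p: "p > 2" and m: "m > 0" and s: "0 \<le> s" "s \<le> 1"
  shows "sqrt (s + a) ^ p * m \<le> s * (sqrt (1 + a) ^ p * m) + (1 - s) * (sqrt (0 + a) ^ p * m)"
    and "0 < s \<Longrightarrow> s < 1 \<Longrightarrow> sqrt (s + a) ^ p * m < s * (sqrt (1 + a) ^ p * m) + (1 - s) * (sqrt (0 + a) ^ p * m)"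
proof -
  show strict: "sqrt (s + a) ^ p * m < s * (sqrt (1 + a) ^ p * m) + (1 - s) * (sqrt (0 + a) ^ p * m)"
    if "0 < s" "s < 1"
  proof -
    have "sqrt (s + a) ^ p * m < (s * sqrt (1 + a) ^ p + (1 - s) * sqrt (0 + a) ^ p) * m"
      using sqrt_pow_strict_convex[OF a p that] m by (intro mult_strict_right_mono) auto
    then show ?thesis by (simp add: algebra_simps)
  qed
  show "sqrt (s + a) ^ p * m \<le> s * (sqrt (1 + a) ^ p * m) + (1 - s) * (sqrt (0 + a) ^ p * m)"
  proof (cases "s = 0 \<or> s = 1")
    case True then show ?thesis by auto
  next
    case False then show ?thesis using strict s by fastforce
  qed
qed
lemma bern_bound:
  fixes u :: "'x::finite \<Rightarrow> real" and p :: nat and a m \<theta> :: real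
  assumes th: "0 < \<theta>" "\<theta> < 1" and a: "a \<ge> 0" and p: "p > 2" and m: "m > 0"
    and u0: "\<And>x. u x \<ge> 0" and u1: "(\<Sum>x\<in>UNIV. u x) = 1"
  defines "g \<equiv> \<lambda>t. sqrt (t + a) ^ p * m"
  defines "V \<equiv> \<theta> * g 1 + (1 - \<theta>) * g 0"
  shows "\<exists>\<psi>. (\<integral>\<^sup>+b. ennreal (g (\<Sum>x\<in>UNIV. u x * (b (Inl x))\<^sup>2))
             \<partial>PiM (range Inl) (NN \<theta> :: ('x + ('x + 'x)) \<Rightarrow> real measure)) = ennreal \<psi>
          \<and> 0 \<le> \<psi> \<and> \<psi> \<le> V \<and> (\<psi> = V \<longleftrightarrow> (\<exists>x. u x = 1))"
proof -
  let ?P = "PiM (range Inl) (NN \<theta> :: ('x + ('x + 'x)) \<Rightarrow> real measure)"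
  define s where "s b = (\<Sum>x\<in>UNIV. u x * (b (Inl x))\<^sup>2)" for b :: "('x + ('x + 'x)) \<Rightarrow> real"
  define R where "R b = (\<Sum>x\<in>UNIV. u x * g ((b (Inl x))\<^sup>2))" for b :: "('x + ('x + 'x)) \<Rightarrow> real"
  have g0: "g t \<ge> 0" if "t \<ge> 0" for t unfolding g_def using m a that by simp
  have s0: "s b \<ge> 0" for b unfolding s_def using u0 by (intro sum_nonneg) simp
  have gm[measurable]: "g \<in> borel_measurable borel" unfolding g_def by measurable
  have th': "0 \<le> \<theta>" "\<theta> \<le> 1" using th by auto
  have V0: "V \<ge> 0" unfolding V_def using th g0 by (intro add_nonneg_nonneg mult_nonneg_nonneg) auto
  have sm[measurable]: "s \<in> borel_measurable ?P" unfolding s_def by measurable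
  have Rm[measurable]: "R \<in> borel_measurable ?P" unfolding R_def by measurable
  have IR: "(\<integral>\<^sup>+b. ennreal (R b) \<partial>?P) = ennreal V"
  proof -
    have "(\<integral>\<^sup>+b. ennreal (R b) \<partial>?P) = (\<integral>\<^sup>+b. (\<Sum>x\<in>UNIV. ennreal (u x * g ((b (Inl x))\<^sup>2))) \<partial>?P)"
      unfolding R_def using u0 g0 by (intro nn_integral_cong) (simp add: sum_ennreal)
    also have "\<dots> = (\<Sum>x\<in>UNIV. \<integral>\<^sup>+b. ennreal (u x * g ((b (Inl x))\<^sup>2)) \<partial>?P)"
      by (rule nn_integral_sum) measurable
    also have "\<dots> = (\<Sum>x\<in>UNIV. ennreal (u x * V))"
    proof (rule sum.cong[OF refl])
      fix x
      have "(\<integral>\<^sup>+b. ennreal (u x * g ((b (Inl x))\<^sup>2)) \<partial>?P) = ennreal (\<theta> * (u x * g (1\<^sup>2)) + (1 - \<theta>) * (u x * g (0\<^sup>2)))"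
        by (rule nn_integral_Pb_comp[OF th', where F="\<lambda>t. u x * g (t\<^sup>2)"]) (use u0 g0 in auto)
      then show "(\<integral>\<^sup>+b. ennreal (u x * g ((b (Inl x))\<^sup>2)) \<partial>?P) = ennreal (u x * V)"
        by (simp add: V_def algebra_simps)
    qed
    also have "\<dots> = ennreal (\<Sum>x\<in>UNIV. u x * V)" using u0 V0 by (simp add: sum_ennreal)
    also have "\<dots> = ennreal V" by (simp add: sum_distrib_right[symmetric] u1)
    finally show ?thesis .
  qed
  have pw: "s b \<ge> 0 \<and> s b \<le> 1 \<and> R b = s b * g 1 + (1 - s b) * g 0"
    if b01: "\<forall>x. b (Inl x) = 0 \<or> b (Inl x) = 1" for b
  proof -
    have sq: "(b (Inl x))\<^sup>2 = b (Inl x)" for x using b01[rule_format, of x] by auto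
    have gx: "g ((b (Inl x))\<^sup>2) = b (Inl x) * g 1 + (1 - b (Inl x)) * g 0" for x
      using b01[rule_format, of x] by auto
    have s1: "s b = (\<Sum>x\<in>UNIV. u x * b (Inl x))" unfolding s_def by (simp add: sq)
    have "s b \<le> (\<Sum>x\<in>UNIV. u x)" unfolding s1
    proof (rule sum_mono)
      fix x show "u x * b (Inl x) \<le> u x" using b01[rule_format, of x] u0[of x] by auto
    qed
    moreover have "s b \<ge> 0" unfolding s_def using u0 by (intro sum_nonneg) simp
    moreover have "R b = s b * g 1 + (1 - s b) * g 0"
    proof -
      have "R b = (\<Sum>x\<in>UNIV. u x * b (Inl x) * g 1 + (u x * g 0 - u x * b (Inl x) * g 0))"
        unfolding R_def gx by (intro sum.cong) (auto simp: algebra_simps)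
      also have "\<dots> = g 1 * (\<Sum>x\<in>UNIV. u x * b (Inl x)) + (g 0 * (\<Sum>x\<in>UNIV. u x) - g 0 * (\<Sum>x\<in>UNIV. u x * b (Inl x)))"
        by (simp add: sum.distrib sum_subtractf sum_distrib_left mult_ac)
      also have "\<dots> = s b * g 1 + (1 - s b) * g 0"
        by (simp add: s1 u1 algebra_simps)
      finally show ?thesis .
    qed
    ultimately show ?thesis using u1 by simp
  qed
  have AE01: "AE b in ?P. \<forall>x. b (Inl x) = 0 \<or> b (Inl x) = 1" by (rule AE_Pb_01)
  have AEle: "AE b in ?P. g (s b) \<le> R b"
    using AE01
  proof eventually_elim
    case (elim b)
    from pw[OF elim] g_convex(1)[OF a p m, of "s b"] show ?case by (simp add: g_def)
  qed
  define \<Psi> where "\<Psi> = (\<integral>\<^sup>+b. ennreal (g (s b)) \<partial>?P)"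
  have PsiV: "\<Psi> \<le> ennreal V"
    unfolding \<Psi>_def IR[symmetric] using AEle by (intro nn_integral_mono_AE) (auto elim!: eventually_mono intro: ennreal_leI)
  define \<psi> where "\<psi> = enn2real \<Psi>"
  have "\<Psi> < top" by (rule le_less_trans[OF PsiV]) simp
  then have psi: "\<Psi> = ennreal \<psi>" "\<psi> \<ge> 0" unfolding \<psi>_def by (auto simp: ennreal_enn2real)
  have psiV: "\<psi> \<le> V" using PsiV psi V0 by (simp add: ennreal_le_iff)
  have eqcase: "\<psi> = V" if "u x0 = 1" for x0
  proof -
    have oth: "u x = 0" if "x \<noteq> x0" for x
    proof -
      have "(\<Sum>x\<in>UNIV. u x) = u x0 + (\<Sum>x\<in>UNIV - {x0}. u x)"
        by (subst sum.remove[of UNIV x0]) auto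
      then have "(\<Sum>x\<in>UNIV - {x0}. u x) = 0" using u1 \<open>u x0 = 1\<close> by simp
      then show ?thesis using that u0 by (subst (asm) sum_nonneg_eq_0_iff) auto
    qed
    have "s b = (b (Inl x0))\<^sup>2" for b
    proof -
      have "s b = u x0 * (b (Inl x0))\<^sup>2 + (\<Sum>x\<in>UNIV - {x0}. u x * (b (Inl x))\<^sup>2)"
        unfolding s_def by (subst sum.remove[of UNIV x0]) auto
      also have "(\<Sum>x\<in>UNIV - {x0}. u x * (b (Inl x))\<^sup>2) = 0" using oth by (intro sum.neutral) auto
      finally show ?thesis using \<open>u x0 = 1\<close> by simp
    qed
    then have "\<Psi> = (\<integral>\<^sup>+b. ennreal (g ((b (Inl x0))\<^sup>2)) \<partial>?P)" unfolding \<Psi>_def by simp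
    also have "\<dots> = ennreal (\<theta> * g (1\<^sup>2) + (1 - \<theta>) * g (0\<^sup>2))"
      by (rule nn_integral_Pb_comp[OF th', where F="\<lambda>t. g (t\<^sup>2)"]) (use g0 in auto)
    finally show ?thesis using psi V0 by (simp add: V_def)
  qed
  have strictcase: "\<psi> < V" if nv: "\<not> (\<exists>x. u x = 1)"
  proof -
    obtain x1 where x1: "u x1 > 0"
    proof (rule ccontr)
      assume "\<not> thesis"
      then have "\<not> u x > 0" for x using that by blast
      then have "\<forall>x. u x = 0" using u0 by (metis antisym not_less)
      then show False using u1 by simp
    qed
    have "(\<Sum>x\<in>UNIV. u x) = u x1 + (\<Sum>x\<in>UNIV - {x1}. u x)"
      by (subst sum.remove[of UNIV x1]) auto
    then have rest: "(\<Sum>x\<in>UNIV - {x1}. u x) = 1 - u x1" using u1 by simp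
    have "u x1 \<le> 1" using rest u0 sum_nonneg[of "UNIV - {x1}" u] by simp
    moreover have "u x1 \<noteq> 1" using nv by blast
    ultimately have "u x1 < 1" by simp
    obtain x2 where x2: "x2 \<noteq> x1" "u x2 > 0"
    proof (rule ccontr)
      assume "\<not> thesis"
      note obt = that
      have "\<not> u x > 0" if "x \<noteq> x1" for x using that \<open>\<not> thesis\<close> obt by blast
      then have "\<forall>x\<in>UNIV - {x1}. u x = 0" using u0 by (metis DiffD2 antisym insertI1 not_less)
      then have "(\<Sum>x\<in>UNIV - {x1}. u x) = 0" by simp
      then show False using rest \<open>u x1 < 1\<close> by simp
    qed
    define h where "h b = R b - g (s b)" for b
    have hm[measurable]: "h \<in> borel_measurable ?P" unfolding h_def by measurable
    have "(\<integral>\<^sup>+b. ennreal (R b) \<partial>?P) = (\<integral>\<^sup>+b. ennreal (g (s b)) + ennreal (h b) \<partial>?P)"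
      using AEle by (intro nn_integral_cong_AE) (auto elim!: eventually_mono simp: h_def ennreal_plus[symmetric] g0 s0)
    also have "\<dots> = \<Psi> + (\<integral>\<^sup>+b. ennreal (h b) \<partial>?P)"
      unfolding \<Psi>_def by (rule nn_integral_add) auto
    finally have sumeq: "ennreal \<psi> + (\<integral>\<^sup>+b. ennreal (h b) \<partial>?P) = ennreal V" using IR psi by simp
    have hpos: "(\<integral>\<^sup>+b. ennreal (h b) \<partial>?P) \<noteq> 0"
    proof
      assume "(\<integral>\<^sup>+b. ennreal (h b) \<partial>?P) = 0"
      then have "AE b in ?P. ennreal (h b) = 0" by (subst (asm) nn_integral_0_iff_AE) auto
      with AE01 have "AE b in ?P. \<not> (b (Inl x1) = 1 \<and> b (Inl x2) = 0)"
      proof eventually_elim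
        case (elim b)
        show ?case
        proof
          assume E: "b (Inl x1) = 1 \<and> b (Inl x2) = 0"
          have s1: "s b \<ge> u x1"
          proof -
            have "u x1 * (b (Inl x1))\<^sup>2 \<le> s b" unfolding s_def
              using u0 by (intro member_le_sum) auto
            then show ?thesis using E by simp
          qed
          have s2: "s b \<le> 1 - u x2"
          proof -
            have "s b = u x2 * (b (Inl x2))\<^sup>2 + (\<Sum>x\<in>UNIV - {x2}. u x * (b (Inl x))\<^sup>2)"
              unfolding s_def by (subst sum.remove[of UNIV x2]) auto
            also have "\<dots> \<le> 0 + (\<Sum>x\<in>UNIV - {x2}. u x)"
              using E elim(1) u0
            proof (intro add_mono sum_mono)
              fix x show "u x * (b (Inl x))\<^sup>2 \<le> u x" using elim(1)[rule_format, of x] u0[of x] by auto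
            qed (use E in auto)
            also have "(\<Sum>x\<in>UNIV - {x2}. u x) = 1 - u x2"
              using u1 by (subst (asm) sum.remove[of UNIV x2]) auto
            finally show ?thesis by simp
          qed
          have "g (s b) < R b"
            using pw[OF elim(1)] g_convex(2)[OF a p m, of "s b"] s1 s2 x1 x2 by (simp add: g_def)
          then show False using elim(2) by (simp add: h_def)
        qed
      qed
      then have "emeasure ?P {b \<in> space ?P. b (Inl x1) = 1 \<and> b (Inl x2) = 0} = 0"
        by (subst (asm) AE_iff_measurable[OF _ refl]) auto
      then show False using emeasure_Pb_pair[OF th' x2(1)[symmetric]] th by simp
    qed
    define hh where "hh = enn2real (\<integral>\<^sup>+b. ennreal (h b) \<partial>?P)"
    have "(\<integral>\<^sup>+b. ennreal (h b) \<partial>?P) \<noteq> top"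
    proof
      assume "(\<integral>\<^sup>+b. ennreal (h b) \<partial>?P) = top"
      then show False using sumeq by simp
    qed
    then have chi: "(\<integral>\<^sup>+b. ennreal (h b) \<partial>?P) = ennreal hh" "hh \<ge> 0"
      unfolding hh_def by (auto simp: ennreal_enn2real less_top)
    have "\<psi> + hh = V" using sumeq chi psi V0 by (simp add: ennreal_plus[symmetric] del: ennreal_plus)
    moreover have "hh \<noteq> 0" using hpos chi by auto
    then have "hh > 0" using chi by simp
    ultimately show ?thesis by simp
  qed
  show ?thesis
    using psi psiV eqcase strictcase unfolding \<Psi>_def s_def by (intro exI[of _ \<psi>]) auto
qed




lemma mp_pos: "mp p > 0"
proof -
  have int: "integrable lborel (\<lambda>x. std_normal_density x * \<bar>x\<bar>^p)"
    by (rule integrable_std_normal_moment_abs)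
  have nn: "AE x in lborel. 0 \<le> std_normal_density x * \<bar>x\<bar>^p" by simp
  have ge: "mp p \<ge> 0" unfolding mp_def by (intro integral_nonneg_AE nn)
  have "mp p \<noteq> 0"
  proof
    assume "mp p = 0"
    then have "AE x in lborel. std_normal_density x * \<bar>x\<bar>^p = 0"
      unfolding mp_def using integral_nonneg_eq_0_iff_AE[OF int nn] by simp
    then have "AE x in lborel. (x::real) = 0"
    proof eventually_elim
      case (elim x) then show ?case using normal_density_pos[of 1 0 x] by simp
    qed
    then have "emeasure lborel {x::real. x \<noteq> 0} = 0"
      by (subst (asm) AE_iff_measurable[OF _ refl]) auto
    moreover have "emeasure lborel {1::real..2} \<le> emeasure lborel {x::real. x \<noteq> 0}"
      by (intro emeasure_mono) auto
    ultimately show False by simp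
  qed
  then show ?thesis using ge by simp
qed

lemma sum_pairs_if:
  fixes f :: "'n::finite \<Rightarrow> real" and j :: "'r::finite"
  shows "(\<Sum>x\<in>UNIV. if snd x = j then f (fst x) else 0) = (\<Sum>l\<in>UNIV. f l)"
proof -
  have "(\<Sum>x\<in>(UNIV::('n\<times>'r) set). if snd x = j then f (fst x) else 0) =
        (\<Sum>x\<in>UNIV \<times> UNIV. if snd x = j then f (fst x) else 0)" by simp
  also have "\<dots> = (\<Sum>(l,j')\<in>UNIV \<times> UNIV. if j' = j then f l else 0)"
    by (simp add: case_prod_unfold)
  also have "\<dots> = (\<Sum>l\<in>UNIV. \<Sum>j'\<in>UNIV. if j' = j then f l else 0)"
    by (rule sum.cartesian_product[symmetric])
  also have "\<dots> = (\<Sum>l\<in>UNIV. f l)" by simp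
  finally show ?thesis .
qed

lemma pnorm_eq:
  fixes A D0 :: "real^'n::finite^'n" and X G :: "'n \<times> 'r::finite \<Rightarrow> real"
  shows "pnorm_pow p (A ** (D0 ** mat_of X + mat_of G) :: real^'r^'n) =
    (\<Sum>i\<in>UNIV. \<Sum>j\<in>UNIV. \<bar>(\<Sum>l\<in>UNIV. (A ** D0) $ i $ l * X (l, j)) + (\<Sum>k\<in>UNIV. A $ i $ k * G (k, j))\<bar>^p)"
proof -
  have "(A ** (D0 ** mat_of X + mat_of G) :: real^'r^'n) = (A ** D0) ** mat_of X + A ** mat_of G"
    by (simp add: matrix_add_ldistrib matrix_mul_assoc)
  then show ?thesis
    unfolding pnorm_pow_def by (simp add: matrix_matrix_mult_def mat_of_def)
qed




lemma T_meas:
  "(\<lambda>\<omega>. (\<lambda>(x::'x). \<omega> (Inl x) * \<omega> (Inr (Inl x)), \<lambda>(x::'x). \<eta> * \<omega> (Inr (Inr x))))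
     \<in> measurable (PiM UNIV (NN \<theta>)) (PiM UNIV (\<lambda>_. borel) \<Otimes>\<^sub>M PiM UNIV (\<lambda>_. borel))"
proof (rule measurable_Pair)
  have "(\<lambda>\<omega>. \<lambda>(x::'x)\<in>UNIV. \<omega> (Inl x) * \<omega> (Inr (Inl x))) \<in> measurable (PiM UNIV (NN \<theta>)) (PiM UNIV (\<lambda>_. borel))"
    by (rule measurable_restrict, rule borel_measurable_times; rule meas_NN_comp) auto
  then show "(\<lambda>\<omega>. \<lambda>(x::'x). \<omega> (Inl x) * \<omega> (Inr (Inl x))) \<in> measurable (PiM UNIV (NN \<theta>)) (PiM UNIV (\<lambda>_. borel))"
    by (simp add: restrict_UNIV)
  have "(\<lambda>\<omega>. \<lambda>(x::'x)\<in>UNIV. \<eta> * \<omega> (Inr (Inr x))) \<in> measurable (PiM UNIV (NN \<theta>)) (PiM UNIV (\<lambda>_. borel))"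
    by (rule measurable_restrict, rule borel_measurable_times, simp, rule meas_NN_comp) auto
  then show "(\<lambda>\<omega>. \<lambda>(x::'x). \<eta> * \<omega> (Inr (Inr x))) \<in> measurable (PiM UNIV (NN \<theta>)) (PiM UNIV (\<lambda>_. borel))"
    by (simp add: restrict_UNIV)
qed

lemma Fx_meas:
  fixes W A :: "real^'n::finite^'n" and p :: nat
  shows "(\<lambda>XG. \<Sum>i\<in>UNIV. \<Sum>j\<in>(UNIV::'r::finite set). \<bar>(\<Sum>l\<in>UNIV. W $ i $ l * fst XG (l, j)) + (\<Sum>k\<in>UNIV. A $ i $ k * snd XG (k, j))\<bar>^p)
     \<in> borel_measurable (PiM UNIV (\<lambda>_. borel) \<Otimes>\<^sub>M PiM UNIV (\<lambda>_. borel))"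
  by measurable

lemma obj_formula:
  fixes p :: nat and \<theta> \<eta> :: real and D0 A :: "real^'n::finite^'n" and r :: "'r::finite itself"
  assumes p: "p > 0" and rows: "\<And>i. (\<Sum>k\<in>UNIV. (A $ i $ k)\<^sup>2) = 1"
  shows "objective p \<theta> \<eta> D0 r A = enn2real (\<Sum>i\<in>UNIV. \<Sum>j\<in>(UNIV::'r set).
     \<integral>\<^sup>+b. ennreal (sqrt ((\<Sum>x\<in>UNIV. ((if snd x = j then (A ** D0) $ i $ fst x else 0) * b (Inl x))\<^sup>2) + \<eta>\<^sup>2)^p * mp p)
       \<partial>PiM (range Inl) (NN \<theta> :: ('n \<times> 'r + ('n \<times> 'r + 'n \<times> 'r)) \<Rightarrow> real measure))"
proof -
  define W where "W = A ** D0"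
  let ?Q = "PiM UNIV (NN \<theta>) :: ('n \<times> 'r + ('n \<times> 'r + 'n \<times> 'r) \<Rightarrow> real) measure"
  let ?S = "PiM (UNIV :: ('n \<times> 'r) set) (\<lambda>_. borel) :: ('n \<times> 'r \<Rightarrow> real) measure"
  let ?T = "\<lambda>\<omega>::('n \<times> 'r + ('n \<times> 'r + 'n \<times> 'r)) \<Rightarrow> real. (\<lambda>(x::'n \<times> 'r). \<omega> (Inl x) * \<omega> (Inr (Inl x)), \<lambda>(x::'n \<times> 'r). \<eta> * \<omega> (Inr (Inr x)))"
  define Fx where "Fx XG = (\<Sum>i\<in>UNIV. \<Sum>j\<in>(UNIV::'r set). \<bar>(\<Sum>l\<in>UNIV. W $ i $ l * fst XG (l, j)) + (\<Sum>k\<in>UNIV. A $ i $ k * snd XG (k, j))\<bar>^p)"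
    for XG :: "('n \<times> 'r \<Rightarrow> real) \<times> ('n \<times> 'r \<Rightarrow> real)"
  define cc where "cc i j x = (if snd x = j then W $ i $ fst x else 0)" for i and j :: 'r and x :: "'n \<times> 'r"
  define ee where "ee i j x = (if snd x = j then \<eta> * A $ i $ fst x else 0)" for i and j :: 'r and x :: "'n \<times> 'r"
  define tm where "tm i j \<omega> = (\<Sum>x\<in>UNIV. cc i j x * \<omega> (Inl x) * \<omega> (Inr (Inl x))) + (\<Sum>x\<in>UNIV. ee i j x * \<omega> (Inr (Inr x)))"
    for i j and \<omega> :: "('n \<times> 'r + ('n \<times> 'r + 'n \<times> 'r)) \<Rightarrow> real"
  have Fxm: "Fx \<in> borel_measurable (?S \<Otimes>\<^sub>M ?S)" unfolding Fx_def by (rule Fx_meas)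
  have Tm: "?T \<in> measurable ?Q (?S \<Otimes>\<^sub>M ?S)" by (rule T_meas)
  have "objective p \<theta> \<eta> D0 r A = (\<integral>XG. Fx XG \<partial>(PiM UNIV (\<lambda>_. BG \<theta>) \<Otimes>\<^sub>M PiM UNIV (\<lambda>_. gauss \<eta>)))"
    unfolding objective_def Fx_def W_def by (simp add: pnorm_eq)
  also have "\<dots> = (\<integral>XG. Fx XG \<partial>distr ?Q (?S \<Otimes>\<^sub>M ?S) ?T)" by (simp only: M_eq)
  also have "\<dots> = (\<integral>\<omega>. Fx (?T \<omega>) \<partial>?Q)" by (rule integral_distr[OF Tm Fxm])
  also have "\<dots> = enn2real (\<integral>\<^sup>+\<omega>. ennreal (Fx (?T \<omega>)) \<partial>?Q)"
    by (rule integral_eq_nn_integral) (use measurable_compose[OF Tm Fxm] in \<open>auto simp: Fx_def intro!: AE_I2 sum_nonneg\<close>)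
  also have "(\<integral>\<^sup>+\<omega>. ennreal (Fx (?T \<omega>)) \<partial>?Q) = (\<integral>\<^sup>+\<omega>. (\<Sum>i\<in>UNIV. \<Sum>j\<in>(UNIV::'r set). ennreal (\<bar>tm i j \<omega>\<bar>^p)) \<partial>?Q)"
  proof (rule nn_integral_cong)
    fix \<omega> :: "('n \<times> 'r + ('n \<times> 'r + 'n \<times> 'r)) \<Rightarrow> real"
    have "tm i j \<omega> = (\<Sum>l\<in>UNIV. W $ i $ l * fst (?T \<omega>) (l, j)) + (\<Sum>k\<in>UNIV. A $ i $ k * snd (?T \<omega>) (k, j))" for i j
    proof -
      have "(\<Sum>x\<in>UNIV. cc i j x * \<omega> (Inl x) * \<omega> (Inr (Inl x))) =
            (\<Sum>x\<in>UNIV. if snd x = j then W $ i $ fst x * \<omega> (Inl (fst x, j)) * \<omega> (Inr (Inl (fst x, j))) else 0)"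
        by (intro sum.cong) (auto simp: cc_def)
      also have "\<dots> = (\<Sum>l\<in>UNIV. W $ i $ l * fst (?T \<omega>) (l, j))"
        by (subst sum_pairs_if) (simp add: mult.assoc)
      finally have 1: "(\<Sum>x\<in>UNIV. cc i j x * \<omega> (Inl x) * \<omega> (Inr (Inl x))) = (\<Sum>l\<in>UNIV. W $ i $ l * fst (?T \<omega>) (l, j))" .
      have "(\<Sum>x\<in>UNIV. ee i j x * \<omega> (Inr (Inr x))) =
            (\<Sum>x\<in>UNIV. if snd x = j then \<eta> * A $ i $ fst x * \<omega> (Inr (Inr (fst x, j))) else 0)"
        by (intro sum.cong) (auto simp: ee_def)
      also have "\<dots> = (\<Sum>k\<in>UNIV. A $ i $ k * snd (?T \<omega>) (k, j))"
        by (subst sum_pairs_if) (simp add: mult_ac)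
      finally show ?thesis using 1 by (simp add: tm_def)
    qed
    then show "ennreal (Fx (?T \<omega>)) = (\<Sum>i\<in>UNIV. \<Sum>j\<in>(UNIV::'r set). ennreal (\<bar>tm i j \<omega>\<bar>^p))"
      unfolding Fx_def by (simp add: sum_ennreal sum_nonneg)
  qed
  also have "\<dots> = (\<Sum>i\<in>UNIV. \<Sum>j\<in>(UNIV::'r set). \<integral>\<^sup>+\<omega>. ennreal (\<bar>tm i j \<omega>\<bar>^p) \<partial>?Q)"
  proof -
    have m: "(\<lambda>\<omega>. ennreal (\<bar>tm i j \<omega>\<bar>^p)) \<in> borel_measurable ?Q" for i j
      unfolding tm_def by measurable
    have "(\<integral>\<^sup>+\<omega>. (\<Sum>i\<in>UNIV. \<Sum>j\<in>(UNIV::'r set). ennreal (\<bar>tm i j \<omega>\<bar>^p)) \<partial>?Q)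
       = (\<Sum>i\<in>UNIV. \<integral>\<^sup>+\<omega>. (\<Sum>j\<in>(UNIV::'r set). ennreal (\<bar>tm i j \<omega>\<bar>^p)) \<partial>?Q)"
      by (rule nn_integral_sum) (use m in measurable)
    also have "\<dots> = (\<Sum>i\<in>UNIV. \<Sum>j\<in>(UNIV::'r set). \<integral>\<^sup>+\<omega>. ennreal (\<bar>tm i j \<omega>\<bar>^p) \<partial>?Q)"
      by (intro sum.cong refl nn_integral_sum m)
    finally show ?thesis .
  qed
  also have "\<dots> = (\<Sum>i\<in>UNIV. \<Sum>j\<in>(UNIV::'r set).
     \<integral>\<^sup>+b. ennreal (sqrt ((\<Sum>x\<in>UNIV. ((if snd x = j then (A ** D0) $ i $ fst x else 0) * b (Inl x))\<^sup>2) + \<eta>\<^sup>2)^p * mp p)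
       \<partial>PiM (range Inl) (NN \<theta> :: ('n \<times> 'r + ('n \<times> 'r + 'n \<times> 'r)) \<Rightarrow> real measure))"
  proof (intro sum.cong refl)
    fix i j
    have ee2: "(\<Sum>x\<in>UNIV. (ee i j x)\<^sup>2) = \<eta>\<^sup>2"
    proof -
      have "(\<Sum>x\<in>UNIV. (ee i j x)\<^sup>2) = (\<Sum>x\<in>UNIV. if snd x = j then \<eta>\<^sup>2 * (A $ i $ fst x)\<^sup>2 else 0)"
        by (intro sum.cong) (auto simp: ee_def power_mult_distrib)
      also have "\<dots> = \<eta>\<^sup>2 * (\<Sum>k\<in>UNIV. (A $ i $ k)\<^sup>2)"
        by (subst sum_pairs_if) (simp add: sum_distrib_left)
      finally show ?thesis using rows by simp
    qed
    show "(\<integral>\<^sup>+\<omega>. ennreal (\<bar>tm i j \<omega>\<bar>^p) \<partial>?Q) =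
     \<integral>\<^sup>+b. ennreal (sqrt ((\<Sum>x\<in>UNIV. ((if snd x = j then (A ** D0) $ i $ fst x else 0) * b (Inl x))\<^sup>2) + \<eta>\<^sup>2)^p * mp p)
       \<partial>PiM (range Inl) (NN \<theta> :: ('n \<times> 'r + ('n \<times> 'r + 'n \<times> 'r)) \<Rightarrow> real measure)"
      unfolding tm_def term_fubini[OF p] ee2 cc_def W_def by simp
  qed
  finally show ?thesis .
qed




lemma orth_rows:
  fixes Q :: "real^'n::finite^'n"
  assumes "orthogonal_matrix Q"
  shows "(\<Sum>k\<in>UNIV. (Q $ i $ k)\<^sup>2) = 1" and "i \<noteq> i' \<Longrightarrow> (\<Sum>k\<in>UNIV. Q $ i $ k * Q $ i' $ k) = 0"
proof -
  have "Q ** transpose Q = mat 1" using assms by (simp add: orthogonal_matrix_def)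
  then have e: "(Q ** transpose Q) $ i $ i' = (if i = i' then 1 else 0)" for i i' by (simp add: mat_def)
  show "(\<Sum>k\<in>UNIV. (Q $ i $ k)\<^sup>2) = 1" using e[of i i]
    by (simp add: matrix_matrix_mult_def transpose_def power2_eq_square)
  show "i \<noteq> i' \<Longrightarrow> (\<Sum>k\<in>UNIV. Q $ i $ k * Q $ i' $ k) = 0" using e[of i i']
    by (simp add: matrix_matrix_mult_def transpose_def)
qed

lemma obj_bound:
  fixes p :: nat and \<theta> \<eta> :: real and D0 A :: "real^'n::finite^'n" and r :: "'r::finite itself"
  assumes p: "p > 2" and th: "0 < \<theta>" "\<theta> < 1"
    and oD: "orthogonal_matrix D0" and oA: "orthogonal_matrix A"
  defines "g \<equiv> \<lambda>t. sqrt (t + \<eta>\<^sup>2) ^ p * mp p"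
  defines "V \<equiv> \<theta> * g 1 + (1 - \<theta>) * g 0"
  shows "objective p \<theta> \<eta> D0 r A \<le> real CARD('n) * real CARD('r) * V"
    and "objective p \<theta> \<eta> D0 r A = real CARD('n) * real CARD('r) * V \<longleftrightarrow>
          (\<forall>i. \<exists>l. ((A ** D0) $ i $ l)\<^sup>2 = 1)"
proof -
  define W where "W = A ** D0"
  have oW: "orthogonal_matrix W" unfolding W_def by (rule orthogonal_matrix_mul[OF oA oD])
  define u where "u i j x = (if snd x = j then (W $ i $ fst x)\<^sup>2 else 0)" for i and j :: 'r and x :: "'n \<times> 'r"
  let ?P = "PiM (range Inl) (NN \<theta> :: ('n \<times> 'r + ('n \<times> 'r + 'n \<times> 'r)) \<Rightarrow> real measure)"
  let ?I = "\<lambda>i j. \<integral>\<^sup>+b. ennreal (sqrt ((\<Sum>x\<in>UNIV. ((if snd x = j then (A ** D0) $ i $ fst x else 0) * b (Inl x))\<^sup>2) + \<eta>\<^sup>2)^p * mp p) \<partial>?P"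
  have Ieq: "?I i j = (\<integral>\<^sup>+b. ennreal (g (\<Sum>x\<in>UNIV. u i j x * (b (Inl x))\<^sup>2)) \<partial>?P)" for i j
  proof -
    have sq: "((if snd x = j then (A ** D0) $ i $ fst x else 0) * b (Inl x))\<^sup>2 = u i j x * (b (Inl x))\<^sup>2" for x b
      by (simp add: u_def W_def power_mult_distrib)
    show ?thesis unfolding g_def sq ..
  qed
  have u0: "u i j x \<ge> 0" for i j x by (simp add: u_def)
  have u1: "(\<Sum>x\<in>UNIV. u i j x) = 1" for i j
    unfolding u_def by (subst sum_pairs_if) (rule orth_rows(1)[OF oW])
  have uv: "(\<exists>x. u i j x = 1) \<longleftrightarrow> (\<exists>l. (W $ i $ l)\<^sup>2 = 1)" for i j
    by (auto simp: u_def split: if_splits)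
  define \<psi> where "\<psi> i j = enn2real (?I i j)" for i j
  have props: "?I i j = ennreal (\<psi> i j) \<and> 0 \<le> \<psi> i j \<and> \<psi> i j \<le> V \<and> (\<psi> i j = V \<longleftrightarrow> (\<exists>l. (W $ i $ l)\<^sup>2 = 1))" for i j
  proof -
    have a: "\<eta>\<^sup>2 \<ge> 0" by simp
    have "\<exists>\<psi>0. (\<integral>\<^sup>+b. ennreal (g (\<Sum>x\<in>UNIV. u i j x * (b (Inl x))\<^sup>2)) \<partial>?P) = ennreal \<psi>0 \<and>
       0 \<le> \<psi>0 \<and> \<psi>0 \<le> V \<and> (\<psi>0 = V \<longleftrightarrow> (\<exists>x. u i j x = 1))"
      using bern_bound[OF th a p mp_pos[of p], of "u i j", OF u0 u1] unfolding g_def V_def .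
    then obtain \<psi>0 where h: "(\<integral>\<^sup>+b. ennreal (g (\<Sum>x\<in>UNIV. u i j x * (b (Inl x))\<^sup>2)) \<partial>?P) = ennreal \<psi>0"
       "0 \<le> \<psi>0" "\<psi>0 \<le> V" "\<psi>0 = V \<longleftrightarrow> (\<exists>x. u i j x = 1)"
      by (elim exE conjE)
    have I: "?I i j = ennreal \<psi>0" using h(1) Ieq by simp
    then have "\<psi> i j = \<psi>0" using h(2) by (simp add: \<psi>_def)
    then show ?thesis using h(2,3,4) I uv by simp
  qed
  have psi: "\<And>i j. ?I i j = ennreal (\<psi> i j)" "\<And>i j. 0 \<le> \<psi> i j" "\<And>i j. \<psi> i j \<le> V"
    "\<And>i j. \<psi> i j = V \<longleftrightarrow> (\<exists>l. (W $ i $ l)\<^sup>2 = 1)"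
    using props by blast+
  have rowsA: "\<And>i. (\<Sum>k\<in>UNIV. (A $ i $ k)\<^sup>2) = 1" by (rule orth_rows(1)[OF oA])
  have obj: "objective p \<theta> \<eta> D0 r A = (\<Sum>i\<in>UNIV. \<Sum>j\<in>(UNIV::'r set). \<psi> i j)"
  proof -
    have p0: "p > 0" using p by simp
    have "objective p \<theta> \<eta> D0 r A = enn2real (\<Sum>i\<in>UNIV. \<Sum>j\<in>(UNIV::'r set). ?I i j)"
      by (rule obj_formula[OF p0 rowsA])
    also have "\<dots> = enn2real (\<Sum>i\<in>UNIV. \<Sum>j\<in>(UNIV::'r set). ennreal (\<psi> i j))" using psi(1) by simp
    also have "\<dots> = (\<Sum>i\<in>UNIV. \<Sum>j\<in>(UNIV::'r set). \<psi> i j)" using psi(2) by (simp add: sum_nonneg)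
    finally show ?thesis .
  qed
  have tot: "(\<Sum>i\<in>(UNIV::'n set). \<Sum>j\<in>(UNIV::'r set). V) = real CARD('n) * real CARD('r) * V" by simp
  show "objective p \<theta> \<eta> D0 r A \<le> real CARD('n) * real CARD('r) * V"
    unfolding obj tot[symmetric] by (intro sum_mono psi(3))
  have "(\<Sum>i\<in>UNIV. \<Sum>j\<in>(UNIV::'r set). \<psi> i j) = (\<Sum>i\<in>(UNIV::'n set). \<Sum>j\<in>(UNIV::'r set). V)
     \<longleftrightarrow> (\<Sum>i\<in>UNIV. \<Sum>j\<in>(UNIV::'r set). V - \<psi> i j) = 0"
    by (simp add: sum_subtractf) (auto)
  also have "\<dots> \<longleftrightarrow> (\<forall>i j. V - \<psi> i j = 0)"
    using psi(3) by (subst sum_nonneg_eq_0_iff) (auto intro!: sum_nonneg simp: sum_nonneg_eq_0_iff)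
  also have "\<dots> \<longleftrightarrow> (\<forall>i. \<exists>l. (W $ i $ l)\<^sup>2 = 1)"
    using psi(4) by auto
  finally show "objective p \<theta> \<eta> D0 r A = real CARD('n) * real CARD('r) * V \<longleftrightarrow>
          (\<forall>i. \<exists>l. ((A ** D0) $ i $ l)\<^sup>2 = 1)"
    unfolding obj tot[symmetric] W_def .
qed




lemma sp_orth:
  fixes P :: "real^'n::finite^'n"
  assumes "signed_perm_matrix P"
  shows "orthogonal_matrix P"
proof -
  obtain \<sigma> s where \<sigma>: "\<sigma> permutes (UNIV :: 'n set)" and s: "\<forall>i. s i = 1 \<or> s i = -1"
    and P: "P = (\<chi> i j. if j = \<sigma> i then s i else 0)"
    using assms unfolding signed_perm_matrix_def by blast
  have s2: "s i * s i = 1" for i using s[rule_format, of i] by auto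
  have "(transpose P ** P) $ j $ j' = (if j = j' then 1 else 0)" for j j'
  proof -
    have "(transpose P ** P) $ j $ j' = (\<Sum>i\<in>UNIV. (if j = \<sigma> i then s i else 0) * (if j' = \<sigma> i then s i else 0))"
      by (simp add: matrix_matrix_mult_def transpose_def P)
    also have "\<dots> = (\<Sum>i\<in>UNIV. if i = inv \<sigma> j then (if j' = j then 1 else 0) else 0)"
    proof (rule sum.cong[OF refl])
      fix i
      have "j = \<sigma> i \<longleftrightarrow> i = inv \<sigma> j" using permutes_inv_eq[OF \<sigma>, of j i] by auto
      then show "(if j = \<sigma> i then s i else 0) * (if j' = \<sigma> i then s i else 0) =
                 (if i = inv \<sigma> j then (if j' = j then 1 else 0) else 0)"
        using s2[of i] by auto
    qed
    also have "\<dots> = (if j = j' then 1 else 0)" by simp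
    finally show ?thesis .
  qed
  then have "transpose P ** P = mat 1" by (simp add: vec_eq_iff mat_def)
  then show ?thesis by (simp add: orthogonal_matrix)
qed

lemma sp_cols:
  fixes P :: "real^'n::finite^'n"
  assumes "signed_perm_matrix P"
  shows "\<exists>l. ((transpose P) $ i $ l)\<^sup>2 = 1"
proof -
  obtain \<sigma> s where \<sigma>: "\<sigma> permutes (UNIV :: 'n set)" and s: "\<forall>i. s i = 1 \<or> s i = -1"
    and P: "P = (\<chi> i j. if j = \<sigma> i then s i else 0)"
    using assms unfolding signed_perm_matrix_def by blast
  have "((transpose P) $ i $ inv \<sigma> i)\<^sup>2 = 1"
    using s[rule_format, of "inv \<sigma> i"] by (auto simp: transpose_def P permutes_inverses[OF \<sigma>])
  then show ?thesis by blast
qed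

lemma sp_of_rows:
  fixes W :: "real^'n::finite^'n"
  assumes oW: "orthogonal_matrix W" and rows: "\<forall>i. \<exists>l. (W $ i $ l)\<^sup>2 = 1"
  shows "signed_perm_matrix (transpose W)"
proof -
  define \<sigma> where "\<sigma> i = (SOME l. (W $ i $ l)\<^sup>2 = 1)" for i
  have \<sigma>1: "(W $ i $ \<sigma> i)\<^sup>2 = 1" for i unfolding \<sigma>_def using someI_ex[OF rows[rule_format, of i]] .
  define s where "s i = W $ i $ \<sigma> i" for i
  have s: "s i = 1 \<or> s i = -1" for i using \<sigma>1[of i] unfolding s_def by (simp add: power2_eq_1_iff)
  have zero: "W $ i $ l = 0" if "l \<noteq> \<sigma> i" for i l
  proof -
    have "(\<Sum>k\<in>UNIV. (W $ i $ k)\<^sup>2) = (W $ i $ \<sigma> i)\<^sup>2 + (\<Sum>k\<in>UNIV - {\<sigma> i}. (W $ i $ k)\<^sup>2)"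
      by (subst sum.remove[of UNIV "\<sigma> i"]) auto
    then have "(\<Sum>k\<in>UNIV - {\<sigma> i}. (W $ i $ k)\<^sup>2) = 0" using orth_rows(1)[OF oW, of i] \<sigma>1[of i] by simp
    then have "(W $ i $ l)\<^sup>2 = 0" using that by (subst (asm) sum_nonneg_eq_0_iff) auto
    then show ?thesis by simp
  qed
  have Wf: "W $ i $ l = (if l = \<sigma> i then s i else 0)" for i l using zero s_def by auto
  have inj: "inj \<sigma>"
  proof (rule injI, rule ccontr)
    fix i i' assume eq: "\<sigma> i = \<sigma> i'" and ne: "i \<noteq> i'"
    have "(\<Sum>k\<in>UNIV. W $ i $ k * W $ i' $ k) = (\<Sum>k\<in>UNIV. if k = \<sigma> i then s i * s i' else 0)"
      by (intro sum.cong) (auto simp: Wf eq)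
    also have "\<dots> = s i * s i'" by simp
    finally have "s i * s i' = 0" using orth_rows(2)[OF oW ne] by simp
    then show False using s[of i] s[of i'] by auto
  qed
  have bij: "bij \<sigma>" using inj finite_UNIV_inj_surj[of \<sigma>] by (simp add: bij_def)
  have perm: "\<sigma> permutes UNIV" using bij by (intro bij_imp_permutes) auto
  have iperm: "inv \<sigma> permutes UNIV" by (rule permutes_inv[OF perm])
  show ?thesis unfolding signed_perm_matrix_def
  proof (intro exI conjI)
    show "inv \<sigma> permutes UNIV" by (rule iperm)
    show "\<forall>i. (s \<circ> inv \<sigma>) i = 1 \<or> (s \<circ> inv \<sigma>) i = -1" using s by simp
    show "transpose W = (\<chi> i j. if j = inv \<sigma> i then (s \<circ> inv \<sigma>) i else 0)"
    proof -
      have "W $ j $ i = (if j = inv \<sigma> i then s (inv \<sigma> i) else 0)" for i j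
      proof -
        have "i = \<sigma> j \<longleftrightarrow> j = inv \<sigma> i" using permutes_inv_eq[OF perm, of i j] by auto
        then show ?thesis by (auto simp: Wf)
      qed
      then show ?thesis by (simp add: vec_eq_iff transpose_def)
    qed
  qed
qed




theorem mainTheorem9:
  fixes p :: nat and \<theta> \<eta> :: real and D0 :: "real^'n::finite^'n"
    and r :: "'r::finite itself"
  assumes "p > 2" and "0 < \<theta>" and "\<theta> < 1" and "\<eta> \<ge> 0"
    and "orthogonal_matrix D0"
  shows "\<forall>A :: real^'n^'n.
           (orthogonal_matrix A \<and>
              (\<forall>B. orthogonal_matrix B \<longrightarrow> objective p \<theta> \<eta> D0 r B \<le> objective p \<theta> \<eta> D0 r A))
           \<longleftrightarrow> (\<exists>P. signed_perm_matrix P \<and> transpose A = D0 ** P)"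
proof (intro allI iffI)
  note p = \<open>p > 2\<close> and th = \<open>0 < \<theta>\<close> \<open>\<theta> < 1\<close> and oD = \<open>orthogonal_matrix D0\<close>
  define C where "C = real CARD('n) * real CARD('r) *
     (\<theta> * (sqrt (1 + \<eta>\<^sup>2) ^ p * mp p) + (1 - \<theta>) * (sqrt (0 + \<eta>\<^sup>2) ^ p * mp p))"
  have bnd: "objective p \<theta> \<eta> D0 r B \<le> C" if "orthogonal_matrix B" for B
    using obj_bound(1)[OF p th oD that, of \<eta> r] unfolding C_def by simp
  have eqC: "objective p \<theta> \<eta> D0 r B = C \<longleftrightarrow> (\<forall>i. \<exists>l. ((B ** D0) $ i $ l)\<^sup>2 = 1)"
    if "orthogonal_matrix B" for B
    using obj_bound(2)[OF p th oD that, of \<eta> r] unfolding C_def by simp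
  have DD: "transpose D0 ** D0 = mat 1" "D0 ** transpose D0 = mat 1"
    using oD by (simp_all add: orthogonal_matrix_def)
  {
    fix A :: "real^'n^'n"
    assume H: "orthogonal_matrix A \<and> (\<forall>B. orthogonal_matrix B \<longrightarrow> objective p \<theta> \<eta> D0 r B \<le> objective p \<theta> \<eta> D0 r A)"
    then have oA: "orthogonal_matrix A" by blast
    have oT: "orthogonal_matrix (transpose D0)" using oD by simp
    have "objective p \<theta> \<eta> D0 r (transpose D0) = C"
    proof (subst eqC[OF oT])
      show "\<forall>i. \<exists>l. ((transpose D0 ** D0) $ i $ l)\<^sup>2 = 1"
        unfolding DD by (auto simp: mat_def intro: exI[of _ i])
    qed
    then have "C \<le> objective p \<theta> \<eta> D0 r A" using H oT by metis
    then have "objective p \<theta> \<eta> D0 r A = C" using bnd[OF oA] by simp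
    then have rows: "\<forall>i. \<exists>l. ((A ** D0) $ i $ l)\<^sup>2 = 1" using eqC[OF oA] by simp
    have sp: "signed_perm_matrix (transpose (A ** D0))"
      by (rule sp_of_rows[OF orthogonal_matrix_mul[OF oA oD] rows])
    have "D0 ** transpose (A ** D0) = D0 ** (transpose D0 ** transpose A)" by (simp add: matrix_transpose_mul)
    also have "\<dots> = (D0 ** transpose D0) ** transpose A" by (rule matrix_mul_assoc)
    also have "\<dots> = transpose A" by (simp add: DD matrix_mul_lid)
    finally have "D0 ** transpose (A ** D0) = transpose A" .
    then show "\<exists>P. signed_perm_matrix P \<and> transpose A = D0 ** P" using sp by metis
  next
    fix A :: "real^'n^'n"
    assume "\<exists>P. signed_perm_matrix P \<and> transpose A = D0 ** P"
    then obtain P where sp: "signed_perm_matrix P" and TA: "transpose A = D0 ** P" by blast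
    have A: "A = transpose P ** transpose D0"
      using arg_cong[OF TA, of transpose] by (simp add: matrix_transpose_mul)
    have oA: "orthogonal_matrix A" unfolding A
      using sp_orth[OF sp] oD by (intro orthogonal_matrix_mul) simp_all
    have AD: "A ** D0 = transpose P" unfolding A by (simp only: matrix_mul_assoc[symmetric] DD(1) matrix_mul_rid)
    have "objective p \<theta> \<eta> D0 r A = C"
      using eqC[OF oA] sp_cols[OF sp] unfolding AD by simp
    then show "orthogonal_matrix A \<and> (\<forall>B. orthogonal_matrix B \<longrightarrow> objective p \<theta> \<eta> D0 r B \<le> objective p \<theta> \<eta> D0 r A)"
      using oA bnd by simp
  }
qed


end
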